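(* In the setting described in the context, let $0<r\le1$ and $k\ge0$, and let $s\in S\setminus(T\cup W_2)$ with $s\in U^k_r$. Then for every move $a_2\in\Gamma_2(s)$: either (1) $\mathrm{Dest}_k(s,a_2)\cap U^k_{>r}\ne\emptyset$, or (2) $\mathrm{Dest}_k(s,a_2)\subseteq U^k_r$ and there is a state $t\in\mathrm{Dest}_k(s,a_2)$ with $\ell_k(t)<\ell_k(s)$.
   Context: Concurrent game structure $G=(S,M,\Gamma_1,\Gamma_2,\delta)$: finite states, finite moves, nonempty move sets $\Gamma_i(s)$, $\delta(s,a_1,a_2)\in\mathrm{Distr}(S)$ (simultaneous independent moves); $\mathrm{Dest}(s,a_1,a_2)=\mathrm{supp}\,\delta(s,a_1,a_2)$. Selectors assign to each state a distribution on available moves. For a valuation $v:S\to[0,1]$: $\mathrm{Pre}_{\xi_1,\xi_2}(v)(s)=\sum_{a,b}\sum_tv(t)\delta(s,a,b)(t)\xi_1(s)(a)\xi_2(s)(b)$, $\mathrm{Pre}_{1:\xi_1}(v)(s)=\inf_{\xi_2}\mathrm{Pre}_{\xi_1,\xi_2}(v)(s)$, $\mathrm{Pre}_1(v)(s)=\sup_{\xi_1}\mathrm{Pre}_{1:\xi_1}(v)(s)$. Fix $T\subseteq S$; $W_2$ is the set of states from which player 1's value for reaching $T$ ($\sup_{\pi_1}\inf_{\pi_2}$ of the probability of visiting $T$) is 0; all states of $T\cup W_2$ are assumed absorbing. Value iteration: $u_0=[T]$ (indicator of $T$), $u_{k+1}=\mathrm{Pre}_1(u_k)$. For each $j\ge1$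 fix a player-1 selector $\zeta_j$ with $\mathrm{Pre}_{1:\zeta_j}(u_{j-1})=\mathrm{Pre}_1(u_{j-1})$. Entry time: $\ell_k(s)=\min\{j\le k:u_j(s)=u_k(s)\}$. Selector $\eta_k$: $\eta_k(s)=\zeta_{\ell_k(s)}(s)$ if $\ell_k(s)>0$, and $\eta_k(s)$ uniform on $\Gamma_1(s)$ if $\ell_k(s)=0$. $\mathrm{Dest}_k(s,a_2)=\bigcup_{a_1\in\mathrm{supp}(\eta_k(s))}\mathrm{Dest}(s,a_1,a_2)$. Value classes: $U^k_r=\{s:u_k(s)=r\}$ and $U^k_{>r}=\{s:u_k(s)>r\}$. *)

theory Defs
  imports "HOL-Probability.Probability_Mass_Function"
begin

(* Concurrent game structure: states of finite type 's, moves of finite type 'm,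
   move sets G1 G2 :: 's => 'm set, transition function d :: 's => 'm => 'm => 's pmf. *)

definition Dest :: "('s \<Rightarrow> 'm \<Rightarrow> 'm \<Rightarrow> 's pmf) \<Rightarrow> 's \<Rightarrow> 'm \<Rightarrow> 'm \<Rightarrow> 's set" where
  "Dest d s a1 a2 = set_pmf (d s a1 a2)"

definition selectors :: "('s \<Rightarrow> 'm set) \<Rightarrow> ('s \<Rightarrow> 'm pmf) set" where
  "selectors G = {xi. \<forall>s. set_pmf (xi s) \<subseteq> G s}"

definition Pre_sel2 :: "('s::finite \<Rightarrow> 'm::finite \<Rightarrow> 'm \<Rightarrow> 's pmf) \<Rightarrow> ('s \<Rightarrow> 'm pmf) \<Rightarrow> ('s \<Rightarrow> 'm pmf)
     \<Rightarrow> ('s \<Rightarrow> real) \<Rightarrow> 's \<Rightarrow> real" where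
  "Pre_sel2 d xi1 xi2 v s =
     (\<Sum>a\<in>UNIV. \<Sum>b\<in>UNIV. \<Sum>t\<in>UNIV. v t * pmf (d s a b) t * pmf (xi1 s) a * pmf (xi2 s) b)"

definition Pre1_sel :: "('s \<Rightarrow> 'm set) \<Rightarrow> ('s::finite \<Rightarrow> 'm::finite \<Rightarrow> 'm \<Rightarrow> 's pmf) \<Rightarrow> ('s \<Rightarrow> 'm pmf)
     \<Rightarrow> ('s \<Rightarrow> real) \<Rightarrow> 's \<Rightarrow> real" where
  "Pre1_sel G2 d xi1 v s = (INF xi2\<in>selectors G2. Pre_sel2 d xi1 xi2 v s)"

definition Pre1 :: "('s \<Rightarrow> 'm set) \<Rightarrow> ('s \<Rightarrow> 'm set) \<Rightarrow> ('s::finite \<Rightarrow> 'm::finite \<Rightarrow> 'm \<Rightarrow> 's pmf)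
     \<Rightarrow> ('s \<Rightarrow> real) \<Rightarrow> 's \<Rightarrow> real" where
  "Pre1 G1 G2 d v s = (SUP xi1\<in>selectors G1. Pre1_sel G2 d xi1 v s)"

definition u_iter :: "('s \<Rightarrow> 'm set) \<Rightarrow> ('s \<Rightarrow> 'm set) \<Rightarrow> ('s::finite \<Rightarrow> 'm::finite \<Rightarrow> 'm \<Rightarrow> 's pmf)
     \<Rightarrow> 's set \<Rightarrow> nat \<Rightarrow> 's \<Rightarrow> real" where
  "u_iter G1 G2 d T k = (Pre1 G1 G2 d ^^ k) (indicator T)"

definition entry :: "('s \<Rightarrow> 'm set) \<Rightarrow> ('s \<Rightarrow> 'm set) \<Rightarrow> ('s::finite \<Rightarrow> 'm::finite \<Rightarrow> 'm \<Rightarrow> 's pmf)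
     \<Rightarrow> 's set \<Rightarrow> nat \<Rightarrow> 's \<Rightarrow> nat" where
  "entry G1 G2 d T k s = (LEAST j. j \<le> k \<and> u_iter G1 G2 d T j s = u_iter G1 G2 d T k s)"

(* selector eta_k built from the fixed optimal selectors zeta_j *)
definition eta :: "('s \<Rightarrow> 'm set) \<Rightarrow> ('s \<Rightarrow> 'm set) \<Rightarrow> ('s::finite \<Rightarrow> 'm::finite \<Rightarrow> 'm \<Rightarrow> 's pmf)
     \<Rightarrow> 's set \<Rightarrow> (nat \<Rightarrow> 's \<Rightarrow> 'm pmf) \<Rightarrow> nat \<Rightarrow> 's \<Rightarrow> 'm pmf" where
  "eta G1 G2 d T zeta k s =
     (if entry G1 G2 d T k s > 0 then zeta (entry G1 G2 d T k s) s else pmf_of_set (G1 s))"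

definition Dest_k :: "('s \<Rightarrow> 'm set) \<Rightarrow> ('s \<Rightarrow> 'm set) \<Rightarrow> ('s::finite \<Rightarrow> 'm::finite \<Rightarrow> 'm \<Rightarrow> 's pmf)
     \<Rightarrow> 's set \<Rightarrow> (nat \<Rightarrow> 's \<Rightarrow> 'm pmf) \<Rightarrow> nat \<Rightarrow> 's \<Rightarrow> 'm \<Rightarrow> 's set" where
  "Dest_k G1 G2 d T zeta k s a2 = (\<Union>a1\<in>set_pmf (eta G1 G2 d T zeta k s). Dest d s a1 a2)"

(* strategies: maps from (nonempty) histories, last element = current state, to
   distributions over moves available at the current state *)
definition strategies :: "('s \<Rightarrow> 'm set) \<Rightarrow> ('s list \<Rightarrow> 'm pmf) set" where
  "strategies G = {pi. \<forall>h. h \<noteq> [] \<longrightarrow> set_pmf (pi h) \<subseteq> G (last h)}"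

primrec reach_within :: "('s \<Rightarrow> 'm \<Rightarrow> 'm \<Rightarrow> 's pmf) \<Rightarrow> 's set \<Rightarrow> ('s list \<Rightarrow> 'm pmf) \<Rightarrow> ('s list \<Rightarrow> 'm pmf)
     \<Rightarrow> nat \<Rightarrow> 's list \<Rightarrow> real" where
  "reach_within d T pi1 pi2 0 h = (if last h \<in> T then 1 else 0)"
| "reach_within d T pi1 pi2 (Suc n) h =
     (if last h \<in> T then 1 else
       measure_pmf.expectation
         (bind_pmf (pi1 h) (\<lambda>a. bind_pmf (pi2 h) (\<lambda>b. d (last h) a b)))
         (\<lambda>t. reach_within d T pi1 pi2 n (h @ [t])))"

definition reach_prob :: "('s \<Rightarrow> 'm \<Rightarrow> 'm \<Rightarrow> 's pmf) \<Rightarrow> 's set \<Rightarrow> ('s list \<Rightarrow> 'm pmf) \<Rightarrow> ('s list \<Rightarrow> 'm pmf)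
     \<Rightarrow> 's \<Rightarrow> real" where
  "reach_prob d T pi1 pi2 s = (SUP n. reach_within d T pi1 pi2 n [s])"

definition val1 :: "('s \<Rightarrow> 'm set) \<Rightarrow> ('s \<Rightarrow> 'm set) \<Rightarrow> ('s \<Rightarrow> 'm \<Rightarrow> 'm \<Rightarrow> 's pmf) \<Rightarrow> 's set \<Rightarrow> 's \<Rightarrow> real" where
  "val1 G1 G2 d T s = (SUP pi1\<in>strategies G1. INF pi2\<in>strategies G2. reach_prob d T pi1 pi2 s)"

definition W2 :: "('s \<Rightarrow> 'm set) \<Rightarrow> ('s \<Rightarrow> 'm set) \<Rightarrow> ('s \<Rightarrow> 'm \<Rightarrow> 'm \<Rightarrow> 's pmf) \<Rightarrow> 's set \<Rightarrow> 's set" where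
  "W2 G1 G2 d T = {s. val1 G1 G2 d T s = 0}"

definition absorbing :: "('s \<Rightarrow> 'm set) \<Rightarrow> ('s \<Rightarrow> 'm set) \<Rightarrow> ('s \<Rightarrow> 'm \<Rightarrow> 'm \<Rightarrow> 's pmf) \<Rightarrow> 's \<Rightarrow> bool" where
  "absorbing G1 G2 d s = (\<forall>a1\<in>G1 s. \<forall>a2\<in>G2 s. d s a1 a2 = return_pmf s)"

end

theory Submission
  imports Defs
begin

lemma sum_pmf1: "(\<Sum>t\<in>UNIV. pmf (p::'a::finite pmf) t) = 1"
  by (simp add: sum_pmf_eq_1)

lemma Pre_sel2_alt: "Pre_sel2 d x1 x2 v s =
   (\<Sum>a\<in>UNIV. \<Sum>b\<in>UNIV. pmf (x1 s) a * pmf (x2 s) b * (\<Sum>t\<in>UNIV. v t * pmf (d s a b) t))"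
  by (simp add: Pre_sel2_def sum_distrib_left mult_ac)

lemma Pre_sel2_bounds:
  assumes "\<And>t. 0 \<le> v t" "\<And>t. v t \<le> 1"
  shows "0 \<le> Pre_sel2 d x1 x2 v s \<and> Pre_sel2 d x1 x2 v s \<le> 1"
proof
  show "0 \<le> Pre_sel2 d x1 x2 v s" unfolding Pre_sel2_alt
    by (intro sum_nonneg mult_nonneg_nonneg) (auto simp: assms)
  have "Pre_sel2 d x1 x2 v s \<le> (\<Sum>a\<in>UNIV. \<Sum>b\<in>UNIV. pmf (x1 s) a * pmf (x2 s) b * 1)"
    unfolding Pre_sel2_alt
  proof (intro sum_mono mult_left_mono)
    fix a b
    have "(\<Sum>t\<in>UNIV. v t * pmf (d s a b) t) \<le> (\<Sum>t\<in>UNIV. 1 * pmf (d s a b) t)"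
      by (intro sum_mono mult_right_mono) (auto simp: assms)
    thus "(\<Sum>t\<in>UNIV. v t * pmf (d s a b) t) \<le> 1" by (simp add: sum_pmf1)
  qed auto
  also have "\<dots> = 1"
    by (simp add: sum_distrib_left[symmetric] sum_distrib_right[symmetric] sum_pmf1)
  finally show "Pre_sel2 d x1 x2 v s \<le> 1" .
qed

lemma selectors_ne:
  assumes "\<And>x. G x \<noteq> {}"
  shows "(\<lambda>x. pmf_of_set ((G::'s \<Rightarrow> 'm::finite set) x)) \<in> selectors G"
  using assms by (auto simp: selectors_def)

lemma Pre1_sel_bounds:
  assumes "\<And>t. 0 \<le> v t" "\<And>t. v t \<le> 1" "\<And>x. G2 x \<noteq> {}"
  shows "0 \<le> Pre1_sel G2 d x1 v s \<and> Pre1_sel G2 d x1 v s \<le> 1"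
proof -
  have ne: "selectors G2 \<noteq> {}" using selectors_ne[of G2, OF assms(3)] by auto
  have bdd: "bdd_below ((\<lambda>xi2. Pre_sel2 d x1 xi2 v s) ` selectors G2)"
    using Pre_sel2_bounds[where v=v, OF assms(1,2)] by (intro bdd_belowI[of _ 0]) auto
  show ?thesis unfolding Pre1_sel_def
  proof
    show "0 \<le> (INF xi2\<in>selectors G2. Pre_sel2 d x1 xi2 v s)"
      using ne Pre_sel2_bounds[where v=v, OF assms(1,2)] by (intro cINF_greatest) auto
    obtain y where "y \<in> selectors G2" using ne by auto
    then have "(INF xi2\<in>selectors G2. Pre_sel2 d x1 xi2 v s) \<le> Pre_sel2 d x1 y v s"
      by (intro cINF_lower bdd)
    also have "\<dots> \<le> 1" using Pre_sel2_bounds[where v=v, OF assms(1,2)] by auto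
    finally show "(INF xi2\<in>selectors G2. Pre_sel2 d x1 xi2 v s) \<le> 1" .
  qed
qed

lemma Pre1_bounds:
  assumes "\<And>t. 0 \<le> v t" "\<And>t. v t \<le> 1" "\<And>x. G2 x \<noteq> {}" "\<And>x. G1 x \<noteq> {}"
  shows "0 \<le> Pre1 G1 G2 d v s \<and> Pre1 G1 G2 d v s \<le> 1"
proof -
  have ne: "selectors G1 \<noteq> {}" using selectors_ne[of G1, OF assms(4)] by auto
  have bdd: "bdd_above ((\<lambda>xi1. Pre1_sel G2 d xi1 v s) ` selectors G1)"
    using Pre1_sel_bounds[of v G2, OF assms(1,2,3)] by (intro bdd_aboveI[of _ 1]) auto
  show ?thesis unfolding Pre1_def
  proof
    show "(SUP xi\<in>selectors G1. Pre1_sel G2 d xi v s) \<le> 1"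
      using ne Pre1_sel_bounds[of v G2, OF assms(1,2,3)] by (intro cSUP_least) auto
    obtain y where "y \<in> selectors G1" using ne by auto
    have "0 \<le> Pre1_sel G2 d y v s" using Pre1_sel_bounds[of v G2, OF assms(1,2,3)] by auto
    also have "\<dots> \<le> (SUP xi\<in>selectors G1. Pre1_sel G2 d xi v s)"
      using \<open>y \<in> _\<close> by (intro cSUP_upper bdd)
    finally show "0 \<le> (SUP xi\<in>selectors G1. Pre1_sel G2 d xi v s)" .
  qed
qed

lemma Pre_sel2_mono:
  assumes "\<And>t. v t \<le> w t"
  shows "Pre_sel2 d x1 x2 v s \<le> Pre_sel2 d x1 x2 w s"
  unfolding Pre_sel2_alt
  by (intro sum_mono mult_left_mono mult_right_mono) (auto simp: assms)

lemma Pre1_sel_mono: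
  assumes "\<And>t. 0 \<le> v t" "\<And>t. v t \<le> w t" "\<And>x. G2 x \<noteq> {}"
  shows "Pre1_sel G2 d x1 v s \<le> Pre1_sel G2 d x1 w s"
proof -
  have ne: "selectors G2 \<noteq> {}" using selectors_ne[of G2, OF assms(3)] by auto
  have bdd: "bdd_below ((\<lambda>xi2. Pre_sel2 d x1 xi2 v s) ` selectors G2)"
  proof (intro bdd_belowI[of _ 0])
    fix x assume "x \<in> (\<lambda>xi2. Pre_sel2 d x1 xi2 v s) ` selectors G2"
    then obtain y where "x = Pre_sel2 d x1 y v s" by auto
    thus "0 \<le> x" unfolding Pre_sel2_alt
      by (auto intro!: sum_nonneg mult_nonneg_nonneg simp: assms)
  qed
  show ?thesis unfolding Pre1_sel_def
  proof (rule cINF_greatest[OF ne])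
    fix y assume y: "y \<in> selectors G2"
    have "(INF xi2\<in>selectors G2. Pre_sel2 d x1 xi2 v s) \<le> Pre_sel2 d x1 y v s"
      by (intro cINF_lower bdd y)
    also have "\<dots> \<le> Pre_sel2 d x1 y w s" by (intro Pre_sel2_mono assms)
    finally show "(INF xi2\<in>selectors G2. Pre_sel2 d x1 xi2 v s) \<le> Pre_sel2 d x1 y w s" .
  qed
qed

lemma Pre1_mono:
  assumes "\<And>t. 0 \<le> v t" "\<And>t. v t \<le> w t" "\<And>t. w t \<le> 1" "\<And>x. G2 x \<noteq> {}" "\<And>x. G1 x \<noteq> {}"
  shows "Pre1 G1 G2 d v s \<le> Pre1 G1 G2 d w s"
proof -
  have ne: "selectors G1 \<noteq> {}" using selectors_ne[of G1, OF assms(5)] by auto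
  have w0: "\<And>t. 0 \<le> w t" using assms(1,2) order_trans by blast
  have bdd: "bdd_above ((\<lambda>xi1. Pre1_sel G2 d xi1 w s) ` selectors G1)"
    using Pre1_sel_bounds[of w G2, OF w0 assms(3,4)] by (intro bdd_aboveI[of _ 1]) auto
  show ?thesis unfolding Pre1_def
  proof (rule cSUP_least[OF ne])
    fix y assume y: "y \<in> selectors G1"
    have "Pre1_sel G2 d y v s \<le> Pre1_sel G2 d y w s" by (intro Pre1_sel_mono assms)
    also have "\<dots> \<le> (SUP xi\<in>selectors G1. Pre1_sel G2 d xi w s)"
      by (intro cSUP_upper bdd y)
    finally show "Pre1_sel G2 d y v s \<le> (SUP xi\<in>selectors G1. Pre1_sel G2 d xi w s)" .
  qed
qed

lemma u_Suc: "u_iter G1 G2 d T (Suc j) = Pre1 G1 G2 d (u_iter G1 G2 d T j)"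
  by (simp add: u_iter_def)

lemma u_0: "u_iter G1 G2 d T 0 = indicator T"
  by (simp add: u_iter_def)

lemma u_bounds:
  assumes "\<And>x. G2 x \<noteq> {}" "\<And>x. G1 x \<noteq> {}"
  shows "0 \<le> u_iter G1 G2 d T j t \<and> u_iter G1 G2 d T j t \<le> 1"
proof (induction j arbitrary: t)
  case 0 thus ?case by (simp add: u_0 indicator_def)
next
  case (Suc j) thus ?case unfolding u_Suc by (intro Pre1_bounds assms) auto
qed

lemma Pre_sel2_absorb:
  assumes "absorbing G1 G2 d s" "x1 \<in> selectors G1" "x2 \<in> selectors G2"
  shows "Pre_sel2 d x1 x2 v s = v s"
proof -
  have "Pre_sel2 d x1 x2 v s = (\<Sum>a\<in>UNIV. \<Sum>b\<in>UNIV. pmf (x1 s) a * pmf (x2 s) b * v s)"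
    unfolding Pre_sel2_alt
  proof (intro sum.cong refl)
    fix a b
    show "pmf (x1 s) a * pmf (x2 s) b * (\<Sum>t\<in>UNIV. v t * pmf (d s a b) t) = pmf (x1 s) a * pmf (x2 s) b * v s"
    proof (cases "a \<in> set_pmf (x1 s) \<and> b \<in> set_pmf (x2 s)")
      case True
      then have "a \<in> G1 s" "b \<in> G2 s" using assms(2,3) by (auto simp: selectors_def)
      then have "d s a b = return_pmf s" using assms(1) by (auto simp: absorbing_def)
      then show ?thesis by (simp add: indicator_def)
    next
      case False
      then show ?thesis by (auto simp: set_pmf_iff)
    qed
  qed
  also have "\<dots> = v s"
    by (simp add: sum_distrib_left[symmetric] sum_distrib_right[symmetric] sum_pmf1)
  finally show ?thesis .
qed

lemma Pre1_absorb:
  assumes "absorbing G1 G2 d s" "\<And>x. G2 x \<noteq> {}" "\<And>x. G1 x \<noteq> {}"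
  shows "Pre1 G1 G2 d v s = v s"
proof -
  have ne1: "selectors G1 \<noteq> {}" using selectors_ne[of G1, OF assms(3)] by auto
  have ne2: "selectors G2 \<noteq> {}" using selectors_ne[of G2, OF assms(2)] by auto
  have "\<And>x1. x1 \<in> selectors G1 \<Longrightarrow> Pre1_sel G2 d x1 v s = v s"
  proof -
    fix x1 assume x1: "x1 \<in> selectors G1"
    have "Pre1_sel G2 d x1 v s = (INF xi2\<in>selectors G2. v s)"
      unfolding Pre1_sel_def using Pre_sel2_absorb[OF assms(1) x1] by (intro INF_cong) auto
    also have "\<dots> = v s" using ne2 by simp
    finally show "Pre1_sel G2 d x1 v s = v s" .
  qed
  then have "Pre1 G1 G2 d v s = (SUP xi1\<in>selectors G1. v s)"
    unfolding Pre1_def by (intro SUP_cong) auto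
  also have "\<dots> = v s" using ne1 by simp
  finally show ?thesis .
qed

lemma Pre_sel2_return:
  assumes "x2 s = return_pmf a2"
  shows "Pre_sel2 d x1 x2 v s = (\<Sum>a\<in>UNIV. \<Sum>t\<in>UNIV. pmf (x1 s) a * pmf (d s a a2) t * v t)"
  unfolding Pre_sel2_alt assms
proof (intro sum.cong refl)
  fix a
  have "(\<Sum>b\<in>UNIV. pmf (x1 s) a * pmf (return_pmf a2) b * (\<Sum>t\<in>UNIV. v t * pmf (d s a b) t))
      = (\<Sum>b\<in>UNIV. if b = a2 then pmf (x1 s) a * (\<Sum>t\<in>UNIV. v t * pmf (d s a b) t) else 0)"
    by (intro sum.cong refl) (auto simp: indicator_def)
  also have "\<dots> = pmf (x1 s) a * (\<Sum>t\<in>UNIV. v t * pmf (d s a a2) t)"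
    by (simp add: sum.delta')
  also have "\<dots> = (\<Sum>t\<in>UNIV. pmf (x1 s) a * pmf (d s a a2) t * v t)"
    by (simp add: sum_distrib_left mult_ac)
  finally show "(\<Sum>b\<in>UNIV. pmf (x1 s) a * pmf (return_pmf a2) b * (\<Sum>t\<in>UNIV. v t * pmf (d s a b) t))
      = (\<Sum>t\<in>UNIV. pmf (x1 s) a * pmf (d s a a2) t * v t)" .
qed

lemma u_mono:
  assumes G1_ne: "\<And>x. G1 x \<noteq> {}" and G2_ne: "\<And>x. G2 x \<noteq> {}"
    and absorb: "\<And>x. x \<in> T \<Longrightarrow> absorbing G1 G2 d x"
    and "i \<le> j"
  shows "u_iter G1 G2 d T i t \<le> u_iter G1 G2 d T j t"
proof -
  have step: "u_iter G1 G2 d T n t \<le> u_iter G1 G2 d T (Suc n) t" for n t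
  proof (induction n arbitrary: t)
    case 0
    show ?case
    proof (cases "t \<in> T")
      case True
      then show ?thesis unfolding u_Suc using Pre1_absorb[OF absorb[OF True] G2_ne G1_ne] by simp
    next
      case False
      then show ?thesis using u_bounds[OF G2_ne G1_ne, where T=T and j=1 and t=t and d=d] by (simp add: u_0)
    qed
  next
    case (Suc n)
    have "Pre1 G1 G2 d (u_iter G1 G2 d T n) t \<le> Pre1 G1 G2 d (u_iter G1 G2 d T (Suc n)) t"
      by (intro Pre1_mono G1_ne G2_ne Suc) (simp_all add: u_bounds[OF G2_ne G1_ne])
    then show ?case by (simp only: u_Suc)
  qed
  show ?thesis using lift_Suc_mono_le[of "\<lambda>n. u_iter G1 G2 d T n t", OF step assms(4)] .
qed

theorem lemma4:
  fixes G1 G2 :: "'s::finite \<Rightarrow> 'm::finite set"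
    and d :: "'s \<Rightarrow> 'm \<Rightarrow> 'm \<Rightarrow> 's pmf"
    and T :: "'s set"
    and zeta :: "nat \<Rightarrow> 's \<Rightarrow> 'm pmf"
    and r :: real and k :: nat and s :: 's and a2 :: 'm
  assumes G1_ne: "\<And>x. G1 x \<noteq> {}"
    and G2_ne: "\<And>x. G2 x \<noteq> {}"
    and absorb: "\<And>x. x \<in> T \<union> W2 G1 G2 d T \<Longrightarrow> absorbing G1 G2 d x"
    and zeta_sel: "\<And>j. j \<ge> 1 \<Longrightarrow> zeta j \<in> selectors G1"
    and zeta_opt: "\<And>j. j \<ge> 1 \<Longrightarrow>
         Pre1_sel G2 d (zeta j) (u_iter G1 G2 d T (j - 1)) = Pre1 G1 G2 d (u_iter G1 G2 d T (j - 1))"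
    and r_pos: "0 < r" and r_le: "r \<le> 1"
    and s_notin: "s \<notin> T \<union> W2 G1 G2 d T"
    and s_val: "u_iter G1 G2 d T k s = r"
    and a2_in: "a2 \<in> G2 s"
  shows "(\<exists>t\<in>Dest_k G1 G2 d T zeta k s a2. u_iter G1 G2 d T k t > r)
       \<or> (Dest_k G1 G2 d T zeta k s a2 \<subseteq> {t. u_iter G1 G2 d T k t = r}
          \<and> (\<exists>t\<in>Dest_k G1 G2 d T zeta k s a2. entry G1 G2 d T k t < entry G1 G2 d T k s))"
proof -
  define u where "u = u_iter G1 G2 d T"
  have absT: "\<And>x. x \<in> T \<Longrightarrow> absorbing G1 G2 d x" using absorb by auto
  have mono: "\<And>i j t. i \<le> j \<Longrightarrow> u i t \<le> u j t"
    unfolding u_def by (rule u_mono[OF G1_ne G2_ne absT])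
  define l where "l = entry G1 G2 d T k s"
  have L: "l \<le> k \<and> u l s = u k s"
    unfolding l_def entry_def u_def by (rule LeastI[of _ k]) simp
  have ul: "u l s = r" using L s_val u_def by simp
  have "u 0 s = 0" using s_notin by (simp add: u_def u_0)
  then have l0: "l \<noteq> 0" using ul r_pos by (cases "l = 0") auto
  then have lS: "l = Suc (l - 1)" by simp
  have eta: "eta G1 G2 d T zeta k s = zeta l s" using l0 by (simp add: eta_def l_def)
  define z where "z = zeta l"
  have zsel: "z \<in> selectors G1" using zeta_sel l0 z_def by auto
  define xi2 where "xi2 = (\<lambda>x. if x = s then return_pmf a2 else pmf_of_set (G2 x))"
  have xi2sel: "xi2 \<in> selectors G2" using a2_in G2_ne by (auto simp: selectors_def xi2_def)
  define D where "D = Dest_k G1 G2 d T zeta k s a2"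
  have D: "D = (\<Union>a\<in>set_pmf (z s). set_pmf (d s a a2))"
    by (simp add: D_def Dest_k_def Dest_def eta z_def)
  define S where "S = (\<Sum>a\<in>UNIV. \<Sum>t\<in>UNIV. pmf (z s) a * pmf (d s a a2) t * u (l - 1) t)"
  have ub: "\<And>j t. 0 \<le> u j t \<and> u j t \<le> 1" unfolding u_def by (rule u_bounds[OF G2_ne G1_ne])
  have "r = u l s" using ul by simp
  also have "\<dots> = Pre1 G1 G2 d (u (l - 1)) s" by (subst (1) lS) (simp only: u_def u_Suc)
  also have "\<dots> = Pre1_sel G2 d z (u (l - 1)) s" using zeta_opt[of l] l0 z_def u_def by simp
  also have "\<dots> \<le> Pre_sel2 d z xi2 (u (l - 1)) s"
    unfolding Pre1_sel_def
  proof (rule cINF_lower[OF _ xi2sel])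
    show "bdd_below ((\<lambda>xi2. Pre_sel2 d z xi2 (u (l - 1)) s) ` selectors G2)"
      using Pre_sel2_bounds[of "u (l - 1)"] ub by (intro bdd_belowI[of _ 0]) auto
  qed
  also have "\<dots> = S" unfolding S_def by (rule Pre_sel2_return) (simp add: xi2_def)
  finally have rS: "r \<le> S" .
  show ?thesis
  proof (cases "\<exists>t\<in>D. u k t > r")
    case True then show ?thesis by (simp add: D_def u_def)
  next
    case False
    then have Dle: "\<And>t. t \<in> D \<Longrightarrow> u k t \<le> r" by auto
    have inD: "\<And>a t. pmf (z s) a * pmf (d s a a2) t \<noteq> 0 \<Longrightarrow> t \<in> D"
      unfolding D by (auto simp: set_pmf_iff)
    have lk: "l - 1 \<le> k" using L by linarith
    define g where "g = (\<lambda>a t. pmf (z s) a * pmf (d s a a2) t * (r - u (l - 1) t))"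
    have gnn: "\<And>a t. 0 \<le> g a t"
    proof -
      fix a t
      show "0 \<le> g a t"
      proof (cases "pmf (z s) a * pmf (d s a a2) t = 0")
        case True then show ?thesis by (simp only: g_def True mult_zero_left order_refl)
      next
        case False
        then have "u (l - 1) t \<le> r" using Dle[OF inD[OF False]] mono[OF lk, of t] by simp
        then show ?thesis by (simp add: g_def)
      qed
    qed
    have tot: "(\<Sum>a\<in>UNIV. \<Sum>t\<in>UNIV. pmf (z s) a * pmf (d s a a2) t * r) = r"
      by (simp add: sum_distrib_left[symmetric] sum_distrib_right[symmetric] sum_pmf1)
    have "(\<Sum>a\<in>UNIV. \<Sum>t\<in>UNIV. g a t) =
        (\<Sum>a\<in>UNIV. \<Sum>t\<in>UNIV. pmf (z s) a * pmf (d s a a2) t * r - pmf (z s) a * pmf (d s a a2) t * u (l - 1) t)"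
      by (simp only: g_def right_diff_distrib)
    also have "\<dots> = (\<Sum>a\<in>UNIV. \<Sum>t\<in>UNIV. pmf (z s) a * pmf (d s a a2) t * r) - S"
      by (simp only: sum_subtractf S_def)
    also have "\<dots> = r - S" by (simp only: tot)
    finally have gs: "(\<Sum>a\<in>UNIV. \<Sum>t\<in>UNIV. g a t) = r - S" .
    have nn: "\<And>a. 0 \<le> (\<Sum>t\<in>UNIV. g a t)" by (intro sum_nonneg gnn)
    have "0 \<le> (\<Sum>a\<in>UNIV. \<Sum>t\<in>UNIV. g a t)" by (intro sum_nonneg nn)
    then have z0: "(\<Sum>a\<in>UNIV. \<Sum>t\<in>UNIV. g a t) = 0" using gs rS by linarith
    have g1: "\<And>a. (\<Sum>t\<in>UNIV. g a t) = 0"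
    proof -
      have "\<forall>x\<in>UNIV. (\<Sum>t\<in>UNIV. g x t) = 0"
        using sum_nonneg_eq_0_iff[where A=UNIV and f="\<lambda>a. \<Sum>t\<in>UNIV. g a t"] nn z0 by simp
      then show "\<And>a. (\<Sum>t\<in>UNIV. g a t) = 0" by simp
    qed
    have g0: "\<And>a t. g a t = 0"
    proof -
      fix a t
      show "g a t = 0"
      proof -
        have "\<forall>x\<in>UNIV. g a x = 0"
          using sum_nonneg_eq_0_iff[where A=UNIV and f="g a"] gnn g1[of a] by simp
        then show ?thesis by simp
      qed
    qed
    have Dr: "\<And>t. t \<in> D \<Longrightarrow> u (l - 1) t = r \<and> u k t = r"
    proof -
      fix t assume t: "t \<in> D"
      then obtain a where a: "a \<in> set_pmf (z s)" "t \<in> set_pmf (d s a a2)" unfolding D by auto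
      then have "pmf (z s) a * pmf (d s a a2) t \<noteq> 0" by (simp add: set_pmf_iff)
      then have e: "u (l - 1) t = r" using g0[of a t] by (simp add: g_def)
      moreover have "u k t = r" using e mono[OF lk, of t] Dle[OF t] by simp
      ultimately show "u (l - 1) t = r \<and> u k t = r" by simp
    qed
    obtain a where a: "a \<in> set_pmf (z s)" using set_pmf_not_empty by fast
    obtain t where t: "t \<in> set_pmf (d s a a2)" using set_pmf_not_empty by fast
    have tD: "t \<in> D" using a t D by auto
    have "entry G1 G2 d T k t \<le> l - 1"
      unfolding entry_def using Dr[OF tD] lk by (intro Least_le) (simp add: u_def)
    then have "entry G1 G2 d T k t < entry G1 G2 d T k s" using l0 l_def by simp
    moreover have "D \<subseteq> {t. u k t = r}" using Dr by auto
    ultimately show ?thesis using tD by (auto simp: D_def u_def)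
  qed
qed

end
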